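(* Let $R$ be a ring with identity, let ${}_RM$ be a finitely generated semisimple left $R$-module and let $\varphi:M\to M$ be a nilpotent $R$-endomorphism. If $\{x_{\gamma,i}\mid\gamma\in\Gamma,1\le i\le k_\gamma\}$ and $\{y_{\delta,j}\mid\delta\in\Delta,1\le j\le l_\delta\}$ are nilpotent Jordan normal bases of ${}_RM$ with respect to $\varphi$, then there exists a bijection $\pi:\Gamma\to\Delta$ such that $k_\gamma=l_{\pi(\gamma)}$ for all $\gamma\in\Gamma$. Thus the sizes of the blocks of a nilpotent Jordan normal base are unique up to a permutation of the blocks.
   Context: For an $R$-endomorphism $\varphi$ of a left $R$-module ${}_RM$, a subset $\{x_{\gamma,i}\mid\gamma\in\Gamma,1\le i\le k_\gamma\}\subseteq M$ (with integers $k_\gamma\ge1$) is a nilpotent Jordan normal base of ${}_RM$ with respect to $\varphi$ if each submodule $Rx_{\gamma,i}$ is simple, $M=\bigoplus_{\gamma\in\Gamma,1\le i\le k_\gamma}Rx_{\gamma,i}$ is a direct sum, $\varphi(x_{\gamma,i})=x_{\gamma,i+1}$ for $1\le i<k_\gamma$, $\varphi(x_{\gamma,k_\gamma})=0$, and the set $\{k_\gamma\mid\gamma\in\Gamma\}$ is bounded. $\Gamma$ is the set of blocks and $k_\gamma$ is the size of block $\gamma$. *)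

theory Defs
  imports "HOL-Algebra.Module"
begin

(* Left modules over a (not necessarily commutative) ring with identity.
   HOL-Algebra's locale module requires a commutative ring, so we restate the
   module axioms over an arbitrary ring. *)
locale left_module = R?: ring R + M?: abelian_group M
  for R :: "('a, 'c) ring_scheme" (structure)
  and M :: "('a, 'b, 'd) module_scheme" (structure) +
  assumes smult_closed [simp, intro]:
      "\<lbrakk>a \<in> carrier R; x \<in> carrier M\<rbrakk> \<Longrightarrow> a \<odot>\<^bsub>M\<^esub> x \<in> carrier M"
    and smult_l_distr:
      "\<lbrakk>a \<in> carrier R; b \<in> carrier R; x \<in> carrier M\<rbrakk> \<Longrightarrow>
      (a \<oplus>\<^bsub>R\<^esub> b) \<odot>\<^bsub>M\<^esub> x = a \<odot>\<^bsub>M\<^esub> x \<oplus>\<^bsub>M\<^esub> b \<odot>\<^bsub>M\<^esub> x"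
    and smult_r_distr:
      "\<lbrakk>a \<in> carrier R; x \<in> carrier M; y \<in> carrier M\<rbrakk> \<Longrightarrow>
      a \<odot>\<^bsub>M\<^esub> (x \<oplus>\<^bsub>M\<^esub> y) = a \<odot>\<^bsub>M\<^esub> x \<oplus>\<^bsub>M\<^esub> a \<odot>\<^bsub>M\<^esub> y"
    and smult_assoc1:
      "\<lbrakk>a \<in> carrier R; b \<in> carrier R; x \<in> carrier M\<rbrakk> \<Longrightarrow>
      (a \<otimes>\<^bsub>R\<^esub> b) \<odot>\<^bsub>M\<^esub> x = a \<odot>\<^bsub>M\<^esub> (b \<odot>\<^bsub>M\<^esub> x)"
    and smult_one [simp]:
      "x \<in> carrier M \<Longrightarrow> \<one>\<^bsub>R\<^esub> \<odot>\<^bsub>M\<^esub> x = x"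

definition cyc :: "('a, 'c) ring_scheme \<Rightarrow> ('a, 'b, 'd) module_scheme \<Rightarrow> 'b \<Rightarrow> 'b set" where
  "cyc R M x = {a \<odot>\<^bsub>M\<^esub> x | a. a \<in> carrier R}"

definition simple_submodule :: "('a, 'c) ring_scheme \<Rightarrow> ('a, 'b, 'd) module_scheme \<Rightarrow> 'b set \<Rightarrow> bool" where
  "simple_submodule R M N \<longleftrightarrow> submodule N R M \<and> N \<noteq> {\<zero>\<^bsub>M\<^esub>} \<and>
     (\<forall>L. submodule L R M \<and> L \<subseteq> N \<longrightarrow> L = {\<zero>\<^bsub>M\<^esub>} \<or> L = N)"

definition submodule_sum :: "('a, 'b, 'd) module_scheme \<Rightarrow> ('i \<Rightarrow> 'b set) \<Rightarrow> 'i set \<Rightarrow> 'b set" where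
  "submodule_sum M N I = {finsum M f F | F f. finite F \<and> F \<subseteq> I \<and> (\<forall>i\<in>F. f i \<in> N i)}"

definition is_direct_sum :: "('a, 'b, 'd) module_scheme \<Rightarrow> ('i \<Rightarrow> 'b set) \<Rightarrow> 'i set \<Rightarrow> bool" where
  "is_direct_sum M N I \<longleftrightarrow> carrier M = submodule_sum M N I \<and>
     (\<forall>F f. finite F \<and> F \<subseteq> I \<and> (\<forall>i\<in>F. f i \<in> N i) \<and> finsum M f F = \<zero>\<^bsub>M\<^esub>
        \<longrightarrow> (\<forall>i\<in>F. f i = \<zero>\<^bsub>M\<^esub>))"

definition finitely_generated :: "('a, 'c) ring_scheme \<Rightarrow> ('a, 'b, 'd) module_scheme \<Rightarrow> bool" where
  "finitely_generated R M \<longleftrightarrow> (\<exists>S. finite S \<and> S \<subseteq> carrier M \<and>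
     carrier M = {finsum M (\<lambda>s. f s \<odot>\<^bsub>M\<^esub> s) S | f. f \<in> S \<rightarrow> carrier R})"

definition semisimple :: "('a, 'c) ring_scheme \<Rightarrow> ('a, 'b, 'd) module_scheme \<Rightarrow> bool" where
  "semisimple R M \<longleftrightarrow> (\<exists>\<S>. (\<forall>N\<in>\<S>. simple_submodule R M N) \<and> carrier M = submodule_sum M (\<lambda>N. N) \<S>)"

definition module_endo :: "('a, 'c) ring_scheme \<Rightarrow> ('a, 'b, 'd) module_scheme \<Rightarrow> ('b \<Rightarrow> 'b) \<Rightarrow> bool" where
  "module_endo R M \<phi> \<longleftrightarrow> \<phi> \<in> carrier M \<rightarrow> carrier M \<and>
     (\<forall>x\<in>carrier M. \<forall>y\<in>carrier M. \<phi> (x \<oplus>\<^bsub>M\<^esub> y) = \<phi> x \<oplus>\<^bsub>M\<^esub> \<phi> y) \<and>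
     (\<forall>a\<in>carrier R. \<forall>x\<in>carrier M. \<phi> (a \<odot>\<^bsub>M\<^esub> x) = a \<odot>\<^bsub>M\<^esub> \<phi> x)"

definition nilpotent_endo :: "('a, 'b, 'd) module_scheme \<Rightarrow> ('b \<Rightarrow> 'b) \<Rightarrow> bool" where
  "nilpotent_endo M \<phi> \<longleftrightarrow> (\<exists>n. \<forall>x\<in>carrier M. (\<phi> ^^ n) x = \<zero>\<^bsub>M\<^esub>)"

definition nilpotent_jordan_base ::
  "('a, 'c) ring_scheme \<Rightarrow> ('a, 'b, 'd) module_scheme \<Rightarrow> ('b \<Rightarrow> 'b) \<Rightarrow> 'g set \<Rightarrow> ('g \<Rightarrow> nat) \<Rightarrow> ('g \<Rightarrow> nat \<Rightarrow> 'b) \<Rightarrow> bool" where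
  "nilpotent_jordan_base R M \<phi> \<Gamma> k x \<longleftrightarrow>
     (\<forall>\<gamma>\<in>\<Gamma>. 1 \<le> k \<gamma>) \<and>
     (\<forall>\<gamma>\<in>\<Gamma>. \<forall>i\<in>{1..k \<gamma>}. x \<gamma> i \<in> carrier M \<and> simple_submodule R M (cyc R M (x \<gamma> i))) \<and>
     is_direct_sum M (\<lambda>(\<gamma>, i). cyc R M (x \<gamma> i)) {(\<gamma>, i). \<gamma> \<in> \<Gamma> \<and> i \<in> {1..k \<gamma>}} \<and>
     (\<forall>\<gamma>\<in>\<Gamma>. \<forall>i. 1 \<le> i \<and> i < k \<gamma> \<longrightarrow> \<phi> (x \<gamma> i) = x \<gamma> (Suc i)) \<and>
     (\<forall>\<gamma>\<in>\<Gamma>. \<phi> (x \<gamma> (k \<gamma>)) = \<zero>\<^bsub>M\<^esub>) \<and>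
     bdd_above (k ` \<Gamma>)"

end

theory Submission
  imports Defs
begin

abbreviation ssum where "ssum M A \<equiv> submodule_sum M (\<lambda>X. X) A"

definition indep :: "('a, 'b, 'd) module_scheme \<Rightarrow> 'b set set \<Rightarrow> bool" where
  "indep M A \<longleftrightarrow> (\<forall>S\<in>A. \<forall>z\<in>S. z \<in> ssum M (A - {S}) \<longrightarrow> z = \<zero>\<^bsub>M\<^esub>)"

lemma cnt_step:
  fixes k :: "'g \<Rightarrow> nat"
  assumes fG: "finite \<Gamma>"
  shows "card {p \<in> {(\<gamma>, i). \<gamma> \<in> \<Gamma> \<and> i \<in> {1..k \<gamma>}}. n < snd p}
       = card {p \<in> {(\<gamma>, i). \<gamma> \<in> \<Gamma> \<and> i \<in> {1..k \<gamma>}}. Suc n < snd p} + card {\<gamma> \<in> \<Gamma>. n < k \<gamma>}"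
proof -
  define A where "A m = {p \<in> {(\<gamma>, i). \<gamma> \<in> \<Gamma> \<and> i \<in> {1..k \<gamma>}}. m < snd p}" for m
  have fA: "finite (A m)" for m
  proof -
    have "A m \<subseteq> (SIGMA \<gamma>:\<Gamma>. {1..k \<gamma>})" unfolding A_def by auto
    moreover have "finite (SIGMA \<gamma>:\<Gamma>. {1..k \<gamma>})" using fG by auto
    ultimately show ?thesis by (rule finite_subset)
  qed
  have sub: "A (Suc n) \<subseteq> A n" unfolding A_def by auto
  have d: "A n - A (Suc n) = (\<lambda>\<gamma>. (\<gamma>, Suc n)) ` {\<gamma> \<in> \<Gamma>. n < k \<gamma>}" unfolding A_def by auto
  have "card (A n) = card (A (Suc n)) + card (A n - A (Suc n))"
    using card_Diff_subset[OF fA sub] card_mono[OF fA sub] by simp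
  also have "card (A n - A (Suc n)) = card {\<gamma> \<in> \<Gamma>. n < k \<gamma>}"
    unfolding d by (rule card_image) (auto simp: inj_on_def)
  finally show ?thesis unfolding A_def .
qed

lemma block_bij:
  fixes k :: "'g \<Rightarrow> nat" and l :: "'h \<Rightarrow> nat"
  assumes fG: "finite \<Gamma>" and fD: "finite \<Delta>" and k1: "\<forall>\<gamma>\<in>\<Gamma>. 1 \<le> k \<gamma>" and l1: "\<forall>\<delta>\<in>\<Delta>. 1 \<le> l \<delta>"
    and c: "\<And>n. card {p \<in> {(\<gamma>, i). \<gamma> \<in> \<Gamma> \<and> i \<in> {1..k \<gamma>}}. n < snd p}
                = card {p \<in> {(\<delta>, j). \<delta> \<in> \<Delta> \<and> j \<in> {1..l \<delta>}}. n < snd p}"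
  shows "\<exists>\<pi>. bij_betw \<pi> \<Gamma> \<Delta> \<and> (\<forall>\<gamma>\<in>\<Gamma>. k \<gamma> = l (\<pi> \<gamma>))"
proof -
  have cn: "card {\<gamma> \<in> \<Gamma>. n < k \<gamma>} = card {\<delta> \<in> \<Delta>. n < l \<delta>}" for n
    using cnt_step[OF fG, of k n] cnt_step[OF fD, of l n] c[of n] c[of "Suc n"] by simp
  have fib: "card {\<gamma> \<in> \<Gamma>. k \<gamma> = m} = card {\<delta> \<in> \<Delta>. l \<delta> = m}" for m
  proof (cases m)
    case 0
    then have "{\<gamma> \<in> \<Gamma>. k \<gamma> = m} = {}" "{\<delta> \<in> \<Delta>. l \<delta> = m} = {}" using k1 l1 by auto
    then show ?thesis by (simp only: card.empty)
  next
    case (Suc m')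
    have e1: "{\<gamma> \<in> \<Gamma>. k \<gamma> = m} = {\<gamma> \<in> \<Gamma>. m' < k \<gamma>} - {\<gamma> \<in> \<Gamma>. Suc m' < k \<gamma>}" using Suc by auto
    have e2: "{\<delta> \<in> \<Delta>. l \<delta> = m} = {\<delta> \<in> \<Delta>. m' < l \<delta>} - {\<delta> \<in> \<Delta>. Suc m' < l \<delta>}" using Suc by auto
    have "card {\<gamma> \<in> \<Gamma>. k \<gamma> = m} = card {\<gamma> \<in> \<Gamma>. m' < k \<gamma>} - card {\<gamma> \<in> \<Gamma>. Suc m' < k \<gamma>}"
      unfolding e1 by (rule card_Diff_subset) (use fG in auto)
    moreover have "card {\<delta> \<in> \<Delta>. l \<delta> = m} = card {\<delta> \<in> \<Delta>. m' < l \<delta>} - card {\<delta> \<in> \<Delta>. Suc m' < l \<delta>}"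
      unfolding e2 by (rule card_Diff_subset) (use fD in auto)
    ultimately show ?thesis using cn[of m'] cn[of "Suc m'"] by simp
  qed
  have "\<forall>m. \<exists>f. bij_betw f {\<gamma> \<in> \<Gamma>. k \<gamma> = m} {\<delta> \<in> \<Delta>. l \<delta> = m}"
  proof
    fix m
    show "\<exists>f. bij_betw f {\<gamma> \<in> \<Gamma>. k \<gamma> = m} {\<delta> \<in> \<Delta>. l \<delta> = m}"
      by (rule finite_same_card_bij) (use fG fD fib in auto)
  qed
  then obtain f where f: "\<And>m. bij_betw (f m) {\<gamma> \<in> \<Gamma>. k \<gamma> = m} {\<delta> \<in> \<Delta>. l \<delta> = m}" by metis
  define \<pi> where "\<pi> \<gamma> = f (k \<gamma>) \<gamma>" for \<gamma>
  have pin: "\<pi> \<gamma> \<in> {\<delta> \<in> \<Delta>. l \<delta> = k \<gamma>}" if "\<gamma> \<in> \<Gamma>" for \<gamma>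
    using f[of "k \<gamma>"] that unfolding \<pi>_def bij_betw_def by auto
  have "bij_betw \<pi> \<Gamma> \<Delta>"
    unfolding bij_betw_def
  proof
    show "inj_on \<pi> \<Gamma>"
    proof (rule inj_onI)
      fix a b assume a: "a \<in> \<Gamma>" and b: "b \<in> \<Gamma>" and e: "\<pi> a = \<pi> b"
      have "k a = k b" using pin[OF a] pin[OF b] e by simp
      then have "f (k a) a = f (k a) b" using e unfolding \<pi>_def by simp
      moreover have "inj_on (f (k a)) {\<gamma> \<in> \<Gamma>. k \<gamma> = k a}" using f[of "k a"] unfolding bij_betw_def by blast
      moreover have "a \<in> {\<gamma> \<in> \<Gamma>. k \<gamma> = k a}" "b \<in> {\<gamma> \<in> \<Gamma>. k \<gamma> = k a}" using a b \<open>k a = k b\<close> by auto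
      ultimately show "a = b" using inj_onD by metis
    qed
    show "\<pi> ` \<Gamma> = \<Delta>"
    proof
      show "\<pi> ` \<Gamma> \<subseteq> \<Delta>" using pin by blast
      show "\<Delta> \<subseteq> \<pi> ` \<Gamma>"
      proof
        fix d assume d: "d \<in> \<Delta>"
        have "d \<in> f (l d) ` {\<gamma> \<in> \<Gamma>. k \<gamma> = l d}" using f[of "l d"] d unfolding bij_betw_def by blast
        then obtain g where g0: "d = f (l d) g" "g \<in> {\<gamma> \<in> \<Gamma>. k \<gamma> = l d}" by (rule imageE)
        then have g: "g \<in> \<Gamma>" "k g = l d" "d = f (l d) g" by auto
        then have "d = \<pi> g" unfolding \<pi>_def by simp
        then show "d \<in> \<pi> ` \<Gamma>" using g by blast
      qed
    qed
  qed
  moreover have "\<forall>\<gamma>\<in>\<Gamma>. k \<gamma> = l (\<pi> \<gamma>)" using pin by auto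
  ultimately show ?thesis by blast
qed

context left_module begin

lemma submodule_iff: "submodule H R M \<longleftrightarrow> H \<subseteq> carrier M \<and> \<zero>\<^bsub>M\<^esub> \<in> H \<and> (\<forall>a\<in>H. \<forall>b\<in>H. a \<oplus>\<^bsub>M\<^esub> b \<in> H) \<and> (\<forall>a\<in>H. \<ominus>\<^bsub>M\<^esub> a \<in> H) \<and> (\<forall>r\<in>carrier R. \<forall>a\<in>H. r \<odot>\<^bsub>M\<^esub> a \<in> H)"
  unfolding submodule_def subgroup_def submodule_axioms_def a_inv_def by auto

lemma sm_carrier: "submodule H R M \<Longrightarrow> x \<in> H \<Longrightarrow> x \<in> carrier M"
  unfolding submodule_iff by blast

lemma sm_zero: "submodule H R M \<Longrightarrow> \<zero>\<^bsub>M\<^esub> \<in> H"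
  unfolding submodule_iff by blast

lemma sm_add: "submodule H R M \<Longrightarrow> a \<in> H \<Longrightarrow> b \<in> H \<Longrightarrow> a \<oplus>\<^bsub>M\<^esub> b \<in> H"
  unfolding submodule_iff by blast

lemma sm_neg: "submodule H R M \<Longrightarrow> a \<in> H \<Longrightarrow> \<ominus>\<^bsub>M\<^esub> a \<in> H"
  unfolding submodule_iff by blast

lemma sm_smult: "submodule H R M \<Longrightarrow> r \<in> carrier R \<Longrightarrow> a \<in> H \<Longrightarrow> r \<odot>\<^bsub>M\<^esub> a \<in> H"
  unfolding submodule_iff by blast

lemma sm_minus: "submodule H R M \<Longrightarrow> a \<in> H \<Longrightarrow> b \<in> H \<Longrightarrow> a \<oplus>\<^bsub>M\<^esub> \<ominus>\<^bsub>M\<^esub> b \<in> H"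
  unfolding submodule_iff by blast

lemma smult_zero [simp]: "a \<in> carrier R \<Longrightarrow> a \<odot>\<^bsub>M\<^esub> \<zero>\<^bsub>M\<^esub> = \<zero>\<^bsub>M\<^esub>"
proof -
  assume a: "a \<in> carrier R"
  have "a \<odot>\<^bsub>M\<^esub> \<zero>\<^bsub>M\<^esub> \<oplus>\<^bsub>M\<^esub> a \<odot>\<^bsub>M\<^esub> \<zero>\<^bsub>M\<^esub> = a \<odot>\<^bsub>M\<^esub> \<zero>\<^bsub>M\<^esub>"
    using smult_r_distr[OF a, of "\<zero>\<^bsub>M\<^esub>" "\<zero>\<^bsub>M\<^esub>"] by simp
  thus ?thesis using a by simp
qed

lemma finsum_smult:
  assumes "a \<in> carrier R" "finite F" "f \<in> F \<rightarrow> carrier M"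
  shows "a \<odot>\<^bsub>M\<^esub> finsum M f F = finsum M (\<lambda>i. a \<odot>\<^bsub>M\<^esub> f i) F"
  using assms(2,3)
proof (induction F rule: finite_induct)
  case empty then show ?case using assms(1) by simp
next
  case (insert i F)
  then show ?case using assms(1) by (simp add: smult_r_distr Pi_def)
qed

lemma finsum_neg:
  assumes "finite F" "f \<in> F \<rightarrow> carrier M"
  shows "\<ominus>\<^bsub>M\<^esub> finsum M f F = finsum M (\<lambda>i. \<ominus>\<^bsub>M\<^esub> f i) F"
  using assms
proof (induction F rule: finite_induct)
  case empty then show ?case by simp
next
  case (insert i F)
  then show ?case by (simp add: M.minus_add M.a_comm Pi_def)
qed

lemma sum_mono: "I \<subseteq> J \<Longrightarrow> submodule_sum M N I \<subseteq> submodule_sum M N J"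
  unfolding submodule_sum_def by blast

lemma sum_intro:
  assumes "finite F" "F \<subseteq> I" "\<And>j. j \<in> F \<Longrightarrow> f j \<in> N j"
  shows "finsum M f F \<in> submodule_sum M N I"
  unfolding submodule_sum_def
proof (rule CollectI, intro exI conjI)
  show "finsum M f F = finsum M f F" by (rule refl)
qed (use assms in auto)

lemma sum_zero: "\<zero>\<^bsub>M\<^esub> \<in> submodule_sum M N I"
  using sum_intro[of "{}" I f N for f] by simp

lemma sum_carrier:
  assumes "\<forall>i\<in>I. N i \<subseteq> carrier M"
  shows "submodule_sum M N I \<subseteq> carrier M"
proof
  fix z assume "z \<in> submodule_sum M N I"
  then obtain F f where z: "z = finsum M f F" "F \<subseteq> I" "\<forall>i\<in>F. f i \<in> N i"
    unfolding submodule_sum_def by blast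
  have "f \<in> F \<rightarrow> carrier M" using z assms by blast
  then show "z \<in> carrier M" using z(1) M.finsum_closed by simp
qed

lemma sum_mem:
  assumes "i \<in> I" "z \<in> N i" "N i \<subseteq> carrier M"
  shows "z \<in> submodule_sum M N I"
proof -
  have zc: "z \<in> carrier M" using assms by blast
  have "finsum M (\<lambda>_. z) {i} = z" using M.finsum_insert[of "{}" i "\<lambda>_. z"] zc by simp
  moreover have "finsum M (\<lambda>_. z) {i} \<in> submodule_sum M N I"
    by (rule sum_intro) (use assms in auto)
  ultimately show ?thesis by simp
qed

lemma sum_least:
  assumes Pc: "P \<subseteq> carrier M" and P0: "\<zero>\<^bsub>M\<^esub> \<in> P" and Padd: "\<And>a b. a \<in> P \<Longrightarrow> b \<in> P \<Longrightarrow> a \<oplus>\<^bsub>M\<^esub> b \<in> P"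
    and NP: "\<forall>i\<in>I. N i \<subseteq> P"
  shows "submodule_sum M N I \<subseteq> P"
proof
  fix z assume "z \<in> submodule_sum M N I"
  then obtain F f where z: "z = finsum M f F" "finite F" "F \<subseteq> I" "\<forall>i\<in>F. f i \<in> N i"
    unfolding submodule_sum_def by blast
  have "finsum M f F \<in> P" using z(2,3,4)
  proof (induction F rule: finite_induct)
    case empty
    have "finsum M f {} = \<zero>\<^bsub>M\<^esub>" by (rule M.finsum_empty)
    then show ?case using P0 by simp
  next
    case (insert i F)
    have fP: "f j \<in> P" if "j \<in> insert i F" for j using insert.prems NP that by blast
    have fc: "f \<in> F \<rightarrow> carrier M" using fP Pc by blast
    have fi: "f i \<in> carrier M" using fP Pc by blast
    have e: "finsum M f (insert i F) = f i \<oplus>\<^bsub>M\<^esub> finsum M f F"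
      by (rule M.finsum_insert[OF insert.hyps(1,2) fc fi])
    have "finsum M f F \<in> P" using insert.IH insert.prems by blast
    then show ?case unfolding e using Padd fP by blast
  qed
  thus "z \<in> P" using z by simp
qed

lemma sum_submodule:
  assumes SM: "\<forall>i\<in>I. submodule (N i) R M"
  shows "submodule (submodule_sum M N I) R M"
proof -
  have NC: "\<forall>i\<in>I. N i \<subseteq> carrier M" using SM sm_carrier by blast
  have add: "a \<oplus>\<^bsub>M\<^esub> b \<in> submodule_sum M N I" if a: "a \<in> submodule_sum M N I" and b: "b \<in> submodule_sum M N I" for a b
  proof -
    obtain F f where A: "a = finsum M f F" "finite F" "F \<subseteq> I" "\<forall>i\<in>F. f i \<in> N i"
      using a unfolding submodule_sum_def by blast
    obtain G g where B: "b = finsum M g G" "finite G" "G \<subseteq> I" "\<forall>i\<in>G. g i \<in> N i"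
      using b unfolding submodule_sum_def by blast
    define f' where "f' i = (if i \<in> F then f i else \<zero>\<^bsub>M\<^esub>)" for i
    define g' where "g' i = (if i \<in> G then g i else \<zero>\<^bsub>M\<^esub>)" for i
    have f'N: "f' i \<in> N i" if "i \<in> F \<union> G" for i
      using A(3,4) B(3) SM sm_zero that unfolding f'_def by auto
    have g'N: "g' i \<in> N i" if "i \<in> F \<union> G" for i
      using B(3,4) A(3) SM sm_zero that unfolding g'_def by auto
    have f'c: "f' \<in> F \<union> G \<rightarrow> carrier M" using f'N NC A(3) B(3) by blast
    have g'c: "g' \<in> F \<union> G \<rightarrow> carrier M" using g'N NC A(3) B(3) by blast
    have fin: "finite (F \<union> G)" using A(2) B(2) by blast
    have "finsum M f' (F \<union> G) = finsum M f F"
      by (rule M.add.finprod_mono_neutral_cong_right[OF fin]) (use f'c in \<open>auto simp: f'_def\<close>)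
    moreover have "finsum M g' (F \<union> G) = finsum M g G"
      by (rule M.add.finprod_mono_neutral_cong_right[OF fin]) (use g'c in \<open>auto simp: g'_def\<close>)
    ultimately have e: "a \<oplus>\<^bsub>M\<^esub> b = finsum M (\<lambda>i. f' i \<oplus>\<^bsub>M\<^esub> g' i) (F \<union> G)"
      using A(1) B(1) M.finsum_addf[OF f'c g'c] by simp
    have "finsum M (\<lambda>i. f' i \<oplus>\<^bsub>M\<^esub> g' i) (F \<union> G) \<in> submodule_sum M N I"
    proof (rule sum_intro[OF fin])
      show "F \<union> G \<subseteq> I" using A(3) B(3) by blast
      fix i assume i: "i \<in> F \<union> G"
      then have "submodule (N i) R M" using A(3) B(3) SM by blast
      then show "f' i \<oplus>\<^bsub>M\<^esub> g' i \<in> N i" using sm_add f'N g'N i by blast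
    qed
    then show ?thesis unfolding e .
  qed
  have neg: "\<ominus>\<^bsub>M\<^esub> a \<in> submodule_sum M N I" if a: "a \<in> submodule_sum M N I" for a
  proof -
    obtain F f where A: "a = finsum M f F" "finite F" "F \<subseteq> I" "\<forall>i\<in>F. f i \<in> N i"
      using a unfolding submodule_sum_def by blast
    have fc: "f \<in> F \<rightarrow> carrier M" using A NC by blast
    have "finsum M (\<lambda>i. \<ominus>\<^bsub>M\<^esub> f i) F \<in> submodule_sum M N I"
    proof (rule sum_intro[OF A(2,3)])
      fix i assume "i \<in> F"
      then show "\<ominus>\<^bsub>M\<^esub> f i \<in> N i" using A SM unfolding submodule_iff by blast
    qed
    then show ?thesis unfolding A(1) finsum_neg[OF A(2) fc] .
  qed
  have sm: "r \<odot>\<^bsub>M\<^esub> a \<in> submodule_sum M N I" if r: "r \<in> carrier R" and a: "a \<in> submodule_sum M N I" for r a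
  proof -
    obtain F f where A: "a = finsum M f F" "finite F" "F \<subseteq> I" "\<forall>i\<in>F. f i \<in> N i"
      using a unfolding submodule_sum_def by blast
    have fc: "f \<in> F \<rightarrow> carrier M" using A NC by blast
    have "finsum M (\<lambda>i. r \<odot>\<^bsub>M\<^esub> f i) F \<in> submodule_sum M N I"
    proof (rule sum_intro[OF A(2,3)])
      fix i assume "i \<in> F"
      then show "r \<odot>\<^bsub>M\<^esub> f i \<in> N i" using A SM r unfolding submodule_iff by blast
    qed
    then show ?thesis unfolding A(1) finsum_smult[OF r A(2) fc] .
  qed
  show ?thesis unfolding submodule_iff using sum_carrier[OF NC] sum_zero add neg sm by simp
qed

lemma sum_insert_decomp:
  assumes NC: "\<forall>j\<in>insert i I. N j \<subseteq> carrier M" and z: "z \<in> submodule_sum M N (insert i I)"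
    and zero: "\<zero>\<^bsub>M\<^esub> \<in> N i"
  shows "\<exists>s\<in>N i. \<exists>u\<in>submodule_sum M N (I - {i}). z = s \<oplus>\<^bsub>M\<^esub> u"
proof -
  obtain F f where A: "z = finsum M f F" "finite F" "F \<subseteq> insert i I" "\<forall>j\<in>F. f j \<in> N j"
    using z unfolding submodule_sum_def by blast
  have fc: "f \<in> F \<rightarrow> carrier M" using A(3,4) NC by blast
  show ?thesis
  proof (cases "i \<in> F")
    case True
    have Fi: "insert i (F - {i}) = F" using True by blast
    have fc': "f \<in> F - {i} \<rightarrow> carrier M" using fc by blast
    have fi: "f i \<in> carrier M" using fc True by blast
    have "finsum M f (insert i (F - {i})) = f i \<oplus>\<^bsub>M\<^esub> finsum M f (F - {i})"
      by (rule M.finsum_insert) (use A(2) fc' fi in auto)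
    then have e: "z = f i \<oplus>\<^bsub>M\<^esub> finsum M f (F - {i})" unfolding Fi A(1) .
    have u: "finsum M f (F - {i}) \<in> submodule_sum M N (I - {i})"
      by (rule sum_intro) (use A(2,3,4) in auto)
    have s: "f i \<in> N i" using A(4) True by blast
    show ?thesis
      by (rule bexI[where x="f i"], rule bexI[where x="finsum M f (F - {i})"]) (rule e, rule u, rule s)
  next
    case False
    have u: "z \<in> submodule_sum M N (I - {i})" unfolding A(1)
      by (rule sum_intro) (use A(2,3,4) False in auto)
    have "z \<in> carrier M" using A(1) fc M.finsum_closed by blast
    then have e: "z = \<zero>\<^bsub>M\<^esub> \<oplus>\<^bsub>M\<^esub> z" by simp
    show ?thesis
      by (rule bexI[where x="\<zero>\<^bsub>M\<^esub>"], rule bexI[where x="z"]) (rule e, rule u, rule zero)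
  qed
qed

lemma sum_reindex:
  assumes "inj_on N I" "\<forall>i\<in>I. N i \<subseteq> carrier M"
  shows "submodule_sum M N I = ssum M (N ` I)"
proof
  show "submodule_sum M N I \<subseteq> ssum M (N ` I)"
  proof
    fix z assume "z \<in> submodule_sum M N I"
    then obtain F f where A: "z = finsum M f F" "finite F" "F \<subseteq> I" "\<forall>j\<in>F. f j \<in> N j"
      unfolding submodule_sum_def by blast
    define g where "g Y = f (inv_into F N Y)" for Y
    have injF: "inj_on N F" using assms A(3) inj_on_subset by blast
    have gN: "g (N j) = f j" if "j \<in> F" for j using injF that unfolding g_def by simp
    have gc: "g \<in> N ` F \<rightarrow> carrier M" using gN A assms by fastforce
    have "finsum M g (N ` F) = finsum M (\<lambda>j. g (N j)) F"
      by (rule M.finsum_reindex[OF gc injF])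
    also have "\<dots> = finsum M f F"
    proof (rule M.finsum_cong')
      show "f \<in> F \<rightarrow> carrier M" using A assms by blast
    qed (use gN in auto)
    finally have "z = finsum M g (N ` F)" using A by simp
    moreover have "\<forall>Y\<in>N ` F. g Y \<in> Y" using gN A by auto
    ultimately show "z \<in> ssum M (N ` I)" unfolding submodule_sum_def using A by blast
  qed
  show "ssum M (N ` I) \<subseteq> submodule_sum M N I"
  proof
    fix z assume "z \<in> ssum M (N ` I)"
    then obtain G g where A: "z = finsum M g G" "finite G" "G \<subseteq> N ` I" "\<forall>Y\<in>G. g Y \<in> Y"
      unfolding submodule_sum_def by blast
    define F where "F = inv_into I N ` G"
    have FI: "F \<subseteq> I" unfolding F_def using A(3) by (auto intro: inv_into_into)
    have NF: "N ` F = G" unfolding F_def using A(3) by (simp add: image_inv_into_cancel)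
    have injF: "inj_on N F" using assms FI inj_on_subset by blast
    have gc: "g \<in> N ` F \<rightarrow> carrier M"
    proof
      fix Y assume "Y \<in> N ` F"
      then obtain j where "j \<in> F" "Y = N j" by blast
      then have "g Y \<in> Y" "j \<in> I" using A(4) NF FI \<open>Y \<in> N ` F\<close> by auto
      then show "g Y \<in> carrier M" using assms \<open>Y = N j\<close> by blast
    qed
    have "z = finsum M (\<lambda>j. g (N j)) F"
      using A(1) M.finsum_reindex[OF gc injF] NF by simp
    moreover have "\<forall>j\<in>F. g (N j) \<in> N j" using A NF by auto
    moreover have "finite F" unfolding F_def using A by simp
    ultimately show "z \<in> submodule_sum M N I" unfolding submodule_sum_def using FI by blast
  qed
qed

lemma submodule_Int: "submodule X R M \<Longrightarrow> submodule Y R M \<Longrightarrow> submodule (X \<inter> Y) R M"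
  unfolding submodule_iff by blast

lemma simple_zero:
  assumes "simple_submodule R M T" "submodule P R M" "z \<in> T" "z \<in> P" "\<not> T \<subseteq> P"
  shows "z = \<zero>\<^bsub>M\<^esub>"
proof -
  have "submodule (T \<inter> P) R M" using assms submodule_Int unfolding simple_submodule_def by blast
  then have "T \<inter> P = {\<zero>\<^bsub>M\<^esub>} \<or> T \<inter> P = T" using assms unfolding simple_submodule_def by blast
  then show ?thesis using assms by blast
qed

lemma alg: "s \<in> carrier M \<Longrightarrow> u \<in> carrier M \<Longrightarrow> z = s \<oplus>\<^bsub>M\<^esub> u \<Longrightarrow> s = z \<oplus>\<^bsub>M\<^esub> \<ominus>\<^bsub>M\<^esub> u"
  by (simp add: M.a_assoc M.r_neg)

lemma ssum_submodule: "\<forall>S\<in>A. submodule S R M \<Longrightarrow> submodule (ssum M A) R M"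
  by (rule sum_submodule) simp

lemma ssum_mem: "S \<in> A \<Longrightarrow> submodule S R M \<Longrightarrow> z \<in> S \<Longrightarrow> z \<in> ssum M A"
  by (rule sum_mem) (auto dest: sm_carrier)

lemma ssum_sub: "S \<in> A \<Longrightarrow> submodule S R M \<Longrightarrow> S \<subseteq> ssum M A"
  using ssum_mem by blast

lemma ssum_least:
  assumes "submodule P R M" "\<forall>S\<in>A. S \<subseteq> P"
  shows "ssum M A \<subseteq> P"
proof (rule sum_least)
  show "P \<subseteq> carrier M" using assms(1) sm_carrier by blast
  show "\<zero>\<^bsub>M\<^esub> \<in> P" using assms(1) sm_zero by blast
  show "a \<oplus>\<^bsub>M\<^esub> b \<in> P" if "a \<in> P" "b \<in> P" for a b using assms(1) that sm_add by blast
qed (use assms in simp)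

lemma ssum_decomp:
  assumes "\<forall>X\<in>insert S A. submodule X R M" "z \<in> ssum M (insert S A)"
  shows "\<exists>s\<in>S. \<exists>u\<in>ssum M (A - {S}). z = s \<oplus>\<^bsub>M\<^esub> u"
proof -
  have c: "\<forall>j\<in>insert S A. j \<subseteq> carrier M" using assms(1) sm_carrier by blast
  have "\<zero>\<^bsub>M\<^esub> \<in> S" using assms(1) sm_zero by blast
  then show ?thesis using sum_insert_decomp[of S A "\<lambda>X. X" z, OF c assms(2)] by simp
qed

lemma ssum_carrier: "\<forall>X\<in>A. submodule X R M \<Longrightarrow> ssum M A \<subseteq> carrier M"
  using ssum_submodule sm_carrier by blast

lemma inter_lemma:
  assumes SM: "\<forall>X\<in>A. submodule X R M" and ind: "indep M A" and XA: "X \<subseteq> A" and S: "S \<in> A"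
    and z1: "z \<in> ssum M X" and z2: "z \<in> ssum M (A - {S})"
  shows "z \<in> ssum M (X - {S})"
proof (cases "S \<in> X")
  case False then show ?thesis using z1 by simp
next
  case True
  have XX: "\<forall>Y\<in>insert S X. submodule Y R M" using SM XA True by blast
  have z1': "z \<in> ssum M (insert S X)" using z1 insert_absorb[OF True] by simp
  obtain s u where su: "s \<in> S" "u \<in> ssum M (X - {S})" "z = s \<oplus>\<^bsub>M\<^esub> u"
    using ssum_decomp[OF XX z1'] by blast
  have P: "submodule (ssum M (A - {S})) R M" using SM by (intro ssum_submodule) auto
  have uA: "u \<in> ssum M (A - {S})" using su(2) sum_mono[of "X - {S}" "A - {S}"] XA by blast
  have sc: "s \<in> carrier M" using su SM S sm_carrier by blast
  have uc: "u \<in> carrier M" using uA P sm_carrier by blast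
  have "s = z \<oplus>\<^bsub>M\<^esub> \<ominus>\<^bsub>M\<^esub> u" using alg sc uc su by blast
  then have "s \<in> ssum M (A - {S})" using sm_minus[OF P z2 uA] by simp
  then have "s = \<zero>\<^bsub>M\<^esub>" using ind S su unfolding indep_def by blast
  then have "z = u" using su(3) uc by simp
  then show ?thesis using su(2) by simp
qed

lemma iter_inter:
  assumes SM: "\<forall>X\<in>A. submodule X R M" and ind: "indep M A" and fin: "finite D" and DA: "D \<subseteq> A"
    and T: "T \<subseteq> ssum M A" and all: "\<forall>S\<in>D. T \<subseteq> ssum M (A - {S})"
  shows "T \<subseteq> ssum M (A - D)"
  using fin DA all
proof (induction D rule: finite_induct)
  case empty then show ?case using T by simp
next
  case (insert S D)
  have h1: "T \<subseteq> ssum M (A - D)" using insert.IH insert.prems by blast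
  have h2: "T \<subseteq> ssum M (A - {S})" using insert.prems by blast
  have SA: "S \<in> A" using insert.prems by blast
  have "T \<subseteq> ssum M (A - D - {S})"
  proof
    fix z assume "z \<in> T"
    then show "z \<in> ssum M (A - D - {S})"
      using inter_lemma[OF SM ind _ SA, of "A - D" z] h1 h2 by blast
  qed
  moreover have "A - D - {S} = A - insert S D" by blast
  ultimately show ?case by simp
qed

lemma exchange:
  assumes SM: "\<forall>X\<in>A. submodule X R M" and ind: "indep M A" and S: "S \<in> A"
    and Ts: "simple_submodule R M T" and Ss: "simple_submodule R M S"
    and T1: "T \<subseteq> ssum M A" and T2: "\<not> T \<subseteq> ssum M (A - {S})"
  shows "ssum M (insert T (A - {S})) = ssum M A" "indep M (insert T (A - {S}))"
proof -
  define B0 where "B0 = A - {S}"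
  define A' where "A' = insert T B0"
  have Tsm: "submodule T R M" using Ts unfolding simple_submodule_def by blast
  have SM': "\<forall>X\<in>A'. submodule X R M" using SM Tsm unfolding A'_def B0_def by blast
  have SMB: "\<forall>X\<in>B0. submodule X R M" using SM unfolding B0_def by blast
  have Y: "submodule (ssum M A') R M" using ssum_submodule[OF SM'] .
  have PA: "submodule (ssum M A) R M" using ssum_submodule[OF SM] .
  have PB: "submodule (ssum M B0) R M" using ssum_submodule[OF SMB] .
  have TB: "T \<notin> B0" using T2 ssum_sub[of T B0] SMB unfolding B0_def by blast
  have a: "ssum M A' \<subseteq> ssum M A"
  proof (rule ssum_least[OF PA], intro ballI)
    fix X assume "X \<in> A'"
    then have "X = T \<or> X \<in> A" unfolding A'_def B0_def by blast
    then show "X \<subseteq> ssum M A" using T1 ssum_sub[of X A] SM by blast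
  qed
  have TY: "T \<subseteq> ssum M A'" using ssum_sub[of T A'] Tsm unfolding A'_def by blast
  have BY: "ssum M B0 \<subseteq> ssum M A'" by (rule sum_mono) (auto simp: A'_def)
  have SY: "S \<subseteq> ssum M A'"
  proof (rule ccontr)
    assume nS: "\<not> S \<subseteq> ssum M A'"
    obtain t where t: "t \<in> T" "t \<notin> ssum M B0" using T2 unfolding B0_def by blast
    have AA: "A = insert S B0" using S unfolding B0_def by blast
    have SMA: "\<forall>X\<in>insert S B0. submodule X R M" using SM AA by simp
    have tA: "t \<in> ssum M (insert S B0)" using T1 t AA by auto
    obtain s u where su: "s \<in> S" "u \<in> ssum M (B0 - {S})" "t = s \<oplus>\<^bsub>M\<^esub> u"
      using ssum_decomp[OF SMA tA] by blast
    have uB: "u \<in> ssum M B0" using su unfolding B0_def by simp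
    have sc: "s \<in> carrier M" using su SM S sm_carrier by blast
    have uc: "u \<in> carrier M" using uB PB sm_carrier by blast
    have "s = t \<oplus>\<^bsub>M\<^esub> \<ominus>\<^bsub>M\<^esub> u" using alg sc uc su by blast
    moreover have "t \<in> ssum M A'" "u \<in> ssum M A'" using TY t uB BY by auto
    ultimately have "s \<in> ssum M A'" using sm_minus[OF Y] by simp
    then have "s = \<zero>\<^bsub>M\<^esub>" using simple_zero[OF Ss Y su(1)] nS by blast
    then have "t = u" using su(3) uc by simp
    then show False using t uB by simp
  qed
  have b: "ssum M A \<subseteq> ssum M A'"
  proof (rule ssum_least[OF Y], intro ballI)
    fix X assume "X \<in> A"
    show "X \<subseteq> ssum M A'"
    proof (cases "X = S")
      case True then show ?thesis using SY by simp
    next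
      case False
      then have "X \<in> A'" using \<open>X \<in> A\<close> unfolding A'_def B0_def by blast
      then show ?thesis using ssum_sub SM' by blast
    qed
  qed
  show "ssum M (insert T (A - {S})) = ssum M A" using a b unfolding A'_def B0_def by blast
  have TZ: "z = \<zero>\<^bsub>M\<^esub>" if "z \<in> T" "z \<in> ssum M B0" for z
    using simple_zero[OF Ts PB that] T2 unfolding B0_def by blast
  have "indep M A'"
    unfolding indep_def
  proof (intro ballI impI)
    fix X z assume X: "X \<in> A'" and z: "z \<in> X" and zs: "z \<in> ssum M (A' - {X})"
    show "z = \<zero>\<^bsub>M\<^esub>"
    proof (cases "X = T")
      case True
      have "A' - {X} = B0" using True TB unfolding A'_def by blast
      then show ?thesis using TZ z zs True by simp
    next
      case False
      then have XB: "X \<in> B0" using X unfolding A'_def by blast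
      have AX: "A' - {X} = insert T (B0 - {X})" using False unfolding A'_def by blast
      have SMX: "\<forall>Y\<in>insert T (B0 - {X}). submodule Y R M" using SMB Tsm by blast
      have zs': "z \<in> ssum M (insert T (B0 - {X}))" using zs unfolding AX .
      obtain t u where tu: "t \<in> T" "u \<in> ssum M (B0 - {X} - {T})" "z = t \<oplus>\<^bsub>M\<^esub> u"
        using ssum_decomp[OF SMX zs'] by blast
      have uB: "u \<in> ssum M B0" using tu(2) sum_mono[of "B0 - {X} - {T}" B0] by blast
      have zB: "z \<in> ssum M B0" using ssum_mem[of X B0 z] XB SMB z by blast
      have tc: "t \<in> carrier M" using tu Tsm sm_carrier by blast
      have uc: "u \<in> carrier M" using uB PB sm_carrier by blast
      have "t = z \<oplus>\<^bsub>M\<^esub> \<ominus>\<^bsub>M\<^esub> u" using alg tc uc tu by blast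
      then have "t \<in> ssum M B0" using sm_minus[OF PB zB uB] by simp
      then have "t = \<zero>\<^bsub>M\<^esub>" using TZ tu by blast
      then have "z = u" using tu(3) uc by simp
      moreover have "u \<in> ssum M (A - {X})" using tu(2) sum_mono[of "B0 - {X} - {T}" "A - {X}"]
        unfolding B0_def by blast
      moreover have "X \<in> A" using XB unfolding B0_def by blast
      ultimately show ?thesis using ind z unfolding indep_def by blast
    qed
  qed
  then show "indep M (insert T (A - {S}))" unfolding A'_def B0_def .
qed

lemma simple_sm: "simple_submodule R M X \<Longrightarrow> submodule X R M"
  unfolding simple_submodule_def by blast

lemma no_extra:
  assumes "indep M B" "T \<in> B" "simple_submodule R M T" "T \<subseteq> ssum M (B - {T})"
  shows False
proof -
  have "\<forall>z\<in>T. z = \<zero>\<^bsub>M\<^esub>" using assms unfolding indep_def by blast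
  moreover have "\<zero>\<^bsub>M\<^esub> \<in> T" using sm_zero simple_sm assms(3) by blast
  ultimately have "T = {\<zero>\<^bsub>M\<^esub>}" by blast
  then show False using assms(3) unfolding simple_submodule_def by blast
qed

lemma card_eq_aux:
  assumes fB: "finite B" and sB: "\<forall>X\<in>B. simple_submodule R M X" and iB: "indep M B"
  shows "\<forall>A. card (A - B) = n \<longrightarrow> finite A \<longrightarrow> (\<forall>X\<in>A. simple_submodule R M X) \<longrightarrow> indep M A
     \<longrightarrow> ssum M A = ssum M B \<longrightarrow> card A = card B"
proof (induction n rule: less_induct)
  case (less n)
  show ?case
  proof (intro allI impI)
    fix A assume n: "card (A - B) = n" and fA: "finite A" and sA: "\<forall>X\<in>A. simple_submodule R M X"
      and iA: "indep M A" and eq: "ssum M A = ssum M B"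
    have SMA: "\<forall>X\<in>A. submodule X R M" using sA simple_sm by blast
    have SMB: "\<forall>X\<in>B. submodule X R M" using sB simple_sm by blast
    show "card A = card B"
    proof (cases "B - A = {}")
      case True
      have "A - B = {}"
      proof (rule ccontr)
        assume "A - B \<noteq> {}"
        then obtain S where S: "S \<in> A" "S \<notin> B" by blast
        have "S \<subseteq> ssum M A" using ssum_sub S SMA by blast
        also have "\<dots> = ssum M B" by (rule eq)
        also have "\<dots> \<subseteq> ssum M (A - {S})" using True S by (intro sum_mono) blast
        finally show False using no_extra[OF iA S(1)] sA S(1) by blast
      qed
      then have "A = B" using True by blast
      then show ?thesis by simp
    next
      case False
      then obtain T where T: "T \<in> B" "T \<notin> A" by blast
      have Ts: "simple_submodule R M T" using sB T by blast
      have TB: "T \<subseteq> ssum M B" using ssum_sub T SMB by blast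
      have TA: "T \<subseteq> ssum M A" using TB eq by simp
      have "\<exists>S\<in>A - B. \<not> T \<subseteq> ssum M (A - {S})"
      proof (rule ccontr)
        assume "\<not> (\<exists>S\<in>A - B. \<not> T \<subseteq> ssum M (A - {S}))"
        then have all: "\<forall>S\<in>A - B. T \<subseteq> ssum M (A - {S})" by blast
        have "T \<subseteq> ssum M (A - (A - B))"
          by (rule iter_inter[OF SMA iA _ _ TA all]) (use fA in auto)
        also have "\<dots> \<subseteq> ssum M (B - {T})" using T by (intro sum_mono) blast
        finally show False using no_extra[OF iB T(1) Ts] by blast
      qed
      then obtain S where S: "S \<in> A" "S \<notin> B" "\<not> T \<subseteq> ssum M (A - {S})" by blast
      have Ss: "simple_submodule R M S" using sA S by blast
      define A' where "A' = insert T (A - {S})"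
      have e1: "ssum M A' = ssum M A" and i1: "indep M A'"
        using exchange[OF SMA iA S(1) Ts Ss TA S(3)] unfolding A'_def by blast+
      have cA': "card A' = card A"
      proof -
        have "card A' = Suc (card (A - {S}))" unfolding A'_def using fA T by (simp add: card_insert_disjoint)
        also have "\<dots> = card A" using card_Suc_Diff1[OF fA S(1)] .
        finally show ?thesis .
      qed
      have d: "A' - B = (A - B) - {S}" unfolding A'_def using T by blast
      have lt: "card (A' - B) < n"
        unfolding d n[symmetric] using fA S(1,2) by (intro psubset_card_mono) blast+
      have fA': "finite A'" unfolding A'_def using fA by simp
      have sA': "\<forall>X\<in>A'. simple_submodule R M X" unfolding A'_def using sA Ts by blast
      have e2: "ssum M A' = ssum M B" using e1 eq by simp
      have "card A' = card B"
        using less.IH[OF lt] fA' sA' i1 e2 by blast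
      then show ?thesis using cA' by simp
    qed
  qed
qed

lemma card_eq:
  assumes "finite A" "finite B" "\<forall>X\<in>A. simple_submodule R M X" "\<forall>X\<in>B. simple_submodule R M X"
    "indep M A" "indep M B" "ssum M A = ssum M B"
  shows "card A = card B"
  using card_eq_aux[OF assms(2,4,6), of "card (A - B)"] assms by blast

lemma finsum_in:
  assumes Pc: "P \<subseteq> carrier M" and P0: "\<zero>\<^bsub>M\<^esub> \<in> P" and Padd: "\<And>a b. a \<in> P \<Longrightarrow> b \<in> P \<Longrightarrow> a \<oplus>\<^bsub>M\<^esub> b \<in> P"
    and fin: "finite F" and gP: "\<forall>p\<in>F. g p \<in> P"
  shows "finsum M g F \<in> P"
  using fin gP
proof (induction F rule: finite_induct)
  case empty
  have "finsum M g {} = \<zero>\<^bsub>M\<^esub>" by (rule M.finsum_empty)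
  then show ?case using P0 by simp
next
  case (insert i F)
  have fc: "g \<in> F \<rightarrow> carrier M" using insert.prems Pc by blast
  have fi: "g i \<in> carrier M" using insert.prems Pc by blast
  have e: "finsum M g (insert i F) = g i \<oplus>\<^bsub>M\<^esub> finsum M g F"
    by (rule M.finsum_insert[OF insert.hyps(1,2) fc fi])
  have "finsum M g F \<in> P" using insert.IH insert.prems by blast
  then show ?case unfolding e using Padd insert.prems by blast
qed

lemma ds_zero:
  assumes ds: "is_direct_sum M N I" and SM: "\<forall>p\<in>I. submodule (N p) R M" and p: "p \<in> I"
    and z: "z \<in> N p" and zs: "z \<in> submodule_sum M N (I - {p})"
  shows "z = \<zero>\<^bsub>M\<^esub>"
proof -
  obtain G h where A: "z = finsum M h G" "finite G" "G \<subseteq> I - {p}" "\<forall>q\<in>G. h q \<in> N q"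
    using zs unfolding submodule_sum_def by blast
  define h' where "h' = h(p := \<ominus>\<^bsub>M\<^esub> z)"
  have pG: "p \<notin> G" using A(3) by blast
  have zc: "z \<in> carrier M" using z SM p sm_carrier by blast
  have hN: "\<forall>q\<in>insert p G. h' q \<in> N q"
  proof
    fix q assume q: "q \<in> insert p G"
    show "h' q \<in> N q"
    proof (cases "q = p")
      case True
      have "\<ominus>\<^bsub>M\<^esub> z \<in> N p" using sm_neg[of "N p" z] SM p z by blast
      then show ?thesis using True unfolding h'_def by simp
    next
      case False
      then have "q \<in> G" using q by blast
      then show ?thesis using A(4) False unfolding h'_def by simp
    qed
  qed
  have hc: "h' \<in> G \<rightarrow> carrier M" using hN SM A(3) sm_carrier by blast
  have hp: "h' p \<in> carrier M" using zc unfolding h'_def by simp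
  have "finsum M h' (insert p G) = h' p \<oplus>\<^bsub>M\<^esub> finsum M h' G"
    by (rule M.finsum_insert[OF A(2) pG hc hp])
  also have "finsum M h' G = finsum M h G"
  proof (rule M.finsum_cong')
    show "h \<in> G \<rightarrow> carrier M" using A(3,4) SM sm_carrier by blast
  qed (use pG in \<open>auto simp: h'_def\<close>)
  also have "h' p = \<ominus>\<^bsub>M\<^esub> z" unfolding h'_def by simp
  finally have "finsum M h' (insert p G) = \<zero>\<^bsub>M\<^esub>" using A(1) zc by (simp add: M.l_neg)
  moreover have dsc: "\<forall>F f. finite F \<and> F \<subseteq> I \<and> (\<forall>i\<in>F. f i \<in> N i) \<and> finsum M f F = \<zero>\<^bsub>M\<^esub> \<longrightarrow> (\<forall>i\<in>F. f i = \<zero>\<^bsub>M\<^esub>)"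
    using ds unfolding is_direct_sum_def by (rule conjunct2)
  moreover have "finite (insert p G)" "insert p G \<subseteq> I" using A(2,3) p by auto
  ultimately have "h' p = \<zero>\<^bsub>M\<^esub>"
    using hN dsc[rule_format, of "insert p G" h'] by blast
  then have "\<ominus>\<^bsub>M\<^esub> z = \<zero>\<^bsub>M\<^esub>" unfolding h'_def by simp
  then have "\<ominus>\<^bsub>M\<^esub> (\<ominus>\<^bsub>M\<^esub> z) = \<ominus>\<^bsub>M\<^esub> \<zero>\<^bsub>M\<^esub>" by simp
  then show ?thesis using zc M.minus_minus[OF zc] M.add.inv_one by simp
qed

lemma ds_inj:
  assumes ds: "is_direct_sum M N I" and S: "\<forall>p\<in>I. simple_submodule R M (N p)"
  shows "inj_on N I"
proof (rule inj_onI, rule ccontr)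
  fix p q assume p: "p \<in> I" and q: "q \<in> I" and e: "N p = N q" and ne: "p \<noteq> q"
  have SM: "\<forall>p\<in>I. submodule (N p) R M" using S simple_sm by blast
  have "N p \<noteq> {\<zero>\<^bsub>M\<^esub>}" using S p unfolding simple_submodule_def by blast
  moreover have "\<zero>\<^bsub>M\<^esub> \<in> N p" using SM p sm_zero by blast
  ultimately obtain z where z: "z \<in> N p" "z \<noteq> \<zero>\<^bsub>M\<^esub>" by blast
  have "q \<in> I - {p}" using q ne by blast
  moreover have "z \<in> N q" using z e by simp
  moreover have "N q \<subseteq> carrier M" using SM q sm_carrier by blast
  ultimately have "z \<in> submodule_sum M N (I - {p})" by (rule sum_mem)
  then show False using ds_zero[OF ds SM p z(1)] z(2) by blast
qed

lemma ds_indep: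
  assumes ds: "is_direct_sum M N I" and S: "\<forall>p\<in>I. simple_submodule R M (N p)" and J: "J \<subseteq> I"
  shows "indep M (N ` J)"
  unfolding indep_def
proof (intro ballI impI)
  fix X z assume X: "X \<in> N ` J" and z: "z \<in> X" and zs: "z \<in> ssum M (N ` J - {X})"
  obtain p where p: "p \<in> J" "X = N p" using X by blast
  have SM: "\<forall>p\<in>I. submodule (N p) R M" using S simple_sm by blast
  have inj: "inj_on N I" by (rule ds_inj[OF ds S])
  have "N ` J - {X} = N ` (J - {p})" using p inj J by (auto simp: inj_on_def)
  moreover have "ssum M (N ` (J - {p})) = submodule_sum M N (J - {p})"
    by (rule sum_reindex[symmetric]) (use inj J SM sm_carrier in \<open>auto intro: inj_on_subset\<close>)
  ultimately have "z \<in> submodule_sum M N (J - {p})" using zs by simp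
  then have "z \<in> submodule_sum M N (I - {p})" using sum_mono[of "J - {p}" "I - {p}"] J by blast
  then show "z = \<zero>\<^bsub>M\<^esub>" using ds_zero[OF ds SM _ _] p z J by blast
qed

lemma endo_zero:
  assumes "module_endo R M f"
  shows "f \<zero>\<^bsub>M\<^esub> = \<zero>\<^bsub>M\<^esub>"
proof -
  have fc: "f \<zero>\<^bsub>M\<^esub> \<in> carrier M" using assms unfolding module_endo_def by blast
  have "f (\<zero>\<^bsub>M\<^esub> \<oplus>\<^bsub>M\<^esub> \<zero>\<^bsub>M\<^esub>) = f \<zero>\<^bsub>M\<^esub> \<oplus>\<^bsub>M\<^esub> f \<zero>\<^bsub>M\<^esub>"
    using assms unfolding module_endo_def by blast
  then have "f \<zero>\<^bsub>M\<^esub> \<oplus>\<^bsub>M\<^esub> f \<zero>\<^bsub>M\<^esub> = f \<zero>\<^bsub>M\<^esub>" by simp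
  then show ?thesis using M.add.l_cancel_one[OF fc fc] by simp
qed

lemma endo_pow:
  assumes "module_endo R M f"
  shows "module_endo R M (f ^^ n)"
proof (induction n)
  case 0 then show ?case unfolding module_endo_def by simp
next
  case (Suc n)
  have A: "f \<in> carrier M \<rightarrow> carrier M"
    "\<forall>x\<in>carrier M. \<forall>y\<in>carrier M. f (x \<oplus>\<^bsub>M\<^esub> y) = f x \<oplus>\<^bsub>M\<^esub> f y"
    "\<forall>a\<in>carrier R. \<forall>x\<in>carrier M. f (a \<odot>\<^bsub>M\<^esub> x) = a \<odot>\<^bsub>M\<^esub> f x"
    using assms unfolding module_endo_def by blast+
  have B: "(f ^^ n) \<in> carrier M \<rightarrow> carrier M"
    "\<forall>x\<in>carrier M. \<forall>y\<in>carrier M. (f ^^ n) (x \<oplus>\<^bsub>M\<^esub> y) = (f ^^ n) x \<oplus>\<^bsub>M\<^esub> (f ^^ n) y"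
    "\<forall>a\<in>carrier R. \<forall>x\<in>carrier M. (f ^^ n) (a \<odot>\<^bsub>M\<^esub> x) = a \<odot>\<^bsub>M\<^esub> (f ^^ n) x"
    using Suc unfolding module_endo_def by blast+
  have C: "(f ^^ n) x \<in> carrier M" if "x \<in> carrier M" for x using B(1) that by blast
  show ?case unfolding module_endo_def
  proof (intro conjI ballI)
    show "f ^^ Suc n \<in> carrier M \<rightarrow> carrier M" using A(1) C by auto
  next
    fix x y assume "x \<in> carrier M" "y \<in> carrier M"
    then show "(f ^^ Suc n) (x \<oplus>\<^bsub>M\<^esub> y) = (f ^^ Suc n) x \<oplus>\<^bsub>M\<^esub> (f ^^ Suc n) y"
      using A(2) B(2) C by simp
  next
    fix a x assume "a \<in> carrier R" "x \<in> carrier M"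
    then show "(f ^^ Suc n) (a \<odot>\<^bsub>M\<^esub> x) = a \<odot>\<^bsub>M\<^esub> (f ^^ Suc n) x"
      using A(3) B(3) C by simp
  qed
qed

lemma endo_finsum:
  assumes e: "module_endo R M f" and fin: "finite F" and gc: "g \<in> F \<rightarrow> carrier M"
  shows "f (finsum M g F) = finsum M (\<lambda>p. f (g p)) F"
  using fin gc
proof (induction F rule: finite_induct)
  case empty then show ?case using endo_zero[OF e] by simp
next
  case (insert i F)
  have fc: "g \<in> F \<rightarrow> carrier M" "g i \<in> carrier M" using insert.prems by blast+
  have fc2: "(\<lambda>p. f (g p)) \<in> F \<rightarrow> carrier M" "f (g i) \<in> carrier M"
    using insert.prems e unfolding module_endo_def by blast+
  have "f (finsum M g (insert i F)) = f (g i \<oplus>\<^bsub>M\<^esub> finsum M g F)"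
    using M.finsum_insert[OF insert.hyps(1,2) fc] by simp
  also have "\<dots> = f (g i) \<oplus>\<^bsub>M\<^esub> f (finsum M g F)"
    using e fc M.finsum_closed[OF fc(1)] unfolding module_endo_def by blast
  also have "\<dots> = f (g i) \<oplus>\<^bsub>M\<^esub> finsum M (\<lambda>p. f (g p)) F" using insert.IH fc by simp
  also have "\<dots> = finsum M (\<lambda>p. f (g p)) (insert i F)"
    using M.finsum_insert[OF insert.hyps(1,2) fc2] by simp
  finally show ?case .
qed

lemma jb_pow:
  assumes jb: "nilpotent_jordan_base R M \<phi> \<Gamma> k x" and e: "module_endo R M \<phi>"
    and g: "\<gamma> \<in> \<Gamma>" and i: "1 \<le> i" "i \<le> k \<gamma>"
  shows "(\<phi> ^^ n) (x \<gamma> i) = (if i + n \<le> k \<gamma> then x \<gamma> (i + n) else \<zero>\<^bsub>M\<^esub>)"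
proof (induction n)
  case 0 then show ?case using i by simp
next
  case (Suc n)
  have st: "\<phi> (x \<gamma> j) = x \<gamma> (Suc j)" if "1 \<le> j" "j < k \<gamma>" for j
    using jb g that unfolding nilpotent_jordan_base_def by blast
  have en: "\<phi> (x \<gamma> (k \<gamma>)) = \<zero>\<^bsub>M\<^esub>" using jb g unfolding nilpotent_jordan_base_def by blast
  have z: "\<phi> \<zero>\<^bsub>M\<^esub> = \<zero>\<^bsub>M\<^esub>" by (rule endo_zero[OF e])
  have "(\<phi> ^^ Suc n) (x \<gamma> i) = \<phi> ((\<phi> ^^ n) (x \<gamma> i))" by simp
  also have "\<dots> = (if i + Suc n \<le> k \<gamma> then x \<gamma> (i + Suc n) else \<zero>\<^bsub>M\<^esub>)"
  proof (cases "i + n < k \<gamma>")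
    case True
    then show ?thesis using Suc st[of "i + n"] i by simp
  next
    case False
    show ?thesis
    proof (cases "i + n = k \<gamma>")
      case True
      then show ?thesis using Suc en by simp
    next
      case False
      then show ?thesis using Suc z \<open>\<not> i + n < k \<gamma>\<close> by simp
    qed
  qed
  finally show ?case .
qed

lemma jb_basic:
  assumes jb: "nilpotent_jordan_base R M \<phi> \<Gamma> k x"
    and I: "I = {(\<gamma>, i). \<gamma> \<in> \<Gamma> \<and> i \<in> {1..k \<gamma>}}" and N: "N = (\<lambda>(\<gamma>, i). cyc R M (x \<gamma> i))"
  shows "is_direct_sum M N I" "\<forall>p\<in>I. simple_submodule R M (N p)" "\<forall>p\<in>I. submodule (N p) R M"
    "\<forall>p\<in>I. N p \<subseteq> carrier M"
proof -
  show ds: "is_direct_sum M N I" using jb unfolding nilpotent_jordan_base_def I N by blast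
  show S: "\<forall>p\<in>I. simple_submodule R M (N p)"
  proof
    fix p assume "p \<in> I"
    then obtain \<gamma> i where "p = (\<gamma>, i)" "\<gamma> \<in> \<Gamma>" "i \<in> {1..k \<gamma>}" unfolding I by blast
    then show "simple_submodule R M (N p)" using jb unfolding nilpotent_jordan_base_def N by simp
  qed
  then show SM: "\<forall>p\<in>I. submodule (N p) R M" using simple_sm by blast
  then show "\<forall>p\<in>I. N p \<subseteq> carrier M" using sm_carrier by blast
qed

lemma jb_image:
  assumes jb: "nilpotent_jordan_base R M \<phi> \<Gamma> k x" and e: "module_endo R M \<phi>"
    and I: "I = {(\<gamma>, i). \<gamma> \<in> \<Gamma> \<and> i \<in> {1..k \<gamma>}}" and N: "N = (\<lambda>(\<gamma>, i). cyc R M (x \<gamma> i))"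
  shows "(\<phi> ^^ n) ` carrier M = submodule_sum M N {p \<in> I. n < snd p}"
proof -
  note B = jb_basic[OF jb I N]
  have xc: "x \<gamma> i \<in> carrier M" if "\<gamma> \<in> \<Gamma>" "1 \<le> i" "i \<le> k \<gamma>" for \<gamma> i
    using jb that unfolding nilpotent_jordan_base_def by auto
  have en: "module_endo R M (\<phi> ^^ n)" by (rule endo_pow[OF e])
  have enc: "(\<phi> ^^ n) v \<in> carrier M" if "v \<in> carrier M" for v using en that unfolding module_endo_def by blast
  have ens: "(\<phi> ^^ n) (a \<odot>\<^bsub>M\<^esub> v) = a \<odot>\<^bsub>M\<^esub> (\<phi> ^^ n) v" if "a \<in> carrier R" "v \<in> carrier M" for a v
    using en that unfolding module_endo_def by blast
  have ena: "(\<phi> ^^ n) (a \<oplus>\<^bsub>M\<^esub> v) = (\<phi> ^^ n) a \<oplus>\<^bsub>M\<^esub> (\<phi> ^^ n) v" if "a \<in> carrier M" "v \<in> carrier M" for a v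
    using en that unfolding module_endo_def by blast
  define P where "P = submodule_sum M N {p \<in> I. n < snd p}"
  have PS: "submodule P R M" unfolding P_def by (rule sum_submodule) (use B in auto)
  show ?thesis
  proof
    show "(\<phi> ^^ n) ` carrier M \<subseteq> submodule_sum M N {p \<in> I. n < snd p}"
    proof
      fix w assume "w \<in> (\<phi> ^^ n) ` carrier M"
      then obtain m where m: "m \<in> carrier M" "w = (\<phi> ^^ n) m" by blast
      have "m \<in> submodule_sum M N I" using m B(1) unfolding is_direct_sum_def by blast
      then obtain F f where A: "m = finsum M f F" "finite F" "F \<subseteq> I" "\<forall>p\<in>F. f p \<in> N p"
        unfolding submodule_sum_def by blast
      have fc: "f \<in> F \<rightarrow> carrier M" using A(3,4) B(4) by blast
      have "w = finsum M (\<lambda>p. (\<phi> ^^ n) (f p)) F" using m(2) A(1) endo_finsum[OF en A(2) fc] by simp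
      also have "\<dots> \<in> P"
      proof (rule finsum_in[OF _ _ _ A(2)])
        show "P \<subseteq> carrier M" using PS sm_carrier by blast
        show "\<zero>\<^bsub>M\<^esub> \<in> P" using PS sm_zero by blast
        show "a \<oplus>\<^bsub>M\<^esub> b \<in> P" if "a \<in> P" "b \<in> P" for a b using PS sm_add that by blast
        show "\<forall>p\<in>F. (\<phi> ^^ n) (f p) \<in> P"
        proof
          fix p assume pF: "p \<in> F"
          then obtain \<gamma> i where p: "p = (\<gamma>, i)" "\<gamma> \<in> \<Gamma>" "1 \<le> i" "i \<le> k \<gamma>" using A(3) unfolding I by auto
          have "f p \<in> cyc R M (x \<gamma> i)" using A(4) pF p(1) unfolding N by auto
          then obtain a where a: "a \<in> carrier R" "f p = a \<odot>\<^bsub>M\<^esub> x \<gamma> i" unfolding cyc_def by blast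
          have "(\<phi> ^^ n) (f p) = a \<odot>\<^bsub>M\<^esub> (\<phi> ^^ n) (x \<gamma> i)" using a ens xc p by simp
          also have "\<dots> = (if i + n \<le> k \<gamma> then a \<odot>\<^bsub>M\<^esub> x \<gamma> (i + n) else \<zero>\<^bsub>M\<^esub>)"
            using jb_pow[OF jb e p(2,3,4), of n] a by simp
          also have "\<dots> \<in> P"
          proof (cases "i + n \<le> k \<gamma>")
            case True
            have q: "(\<gamma>, i + n) \<in> {p \<in> I. n < snd p}" using True p unfolding I by auto
            have "a \<odot>\<^bsub>M\<^esub> x \<gamma> (i + n) \<in> N (\<gamma>, i + n)" using a unfolding N cyc_def by auto
            then have "a \<odot>\<^bsub>M\<^esub> x \<gamma> (i + n) \<in> P" unfolding P_def
              using sum_mem[OF q] B(4) q by blast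
            then show ?thesis using True by simp
          next
            case False then show ?thesis using PS sm_zero by simp
          qed
          finally show "(\<phi> ^^ n) (f p) \<in> P" .
        qed
      qed
      finally show "w \<in> submodule_sum M N {p \<in> I. n < snd p}" unfolding P_def .
    qed
  next
    show "submodule_sum M N {p \<in> I. n < snd p} \<subseteq> (\<phi> ^^ n) ` carrier M"
    proof (rule sum_least)
      show "(\<phi> ^^ n) ` carrier M \<subseteq> carrier M" using enc by blast
      have "\<zero>\<^bsub>M\<^esub> = (\<phi> ^^ n) \<zero>\<^bsub>M\<^esub>" using endo_zero[OF en] by simp
      then show "\<zero>\<^bsub>M\<^esub> \<in> (\<phi> ^^ n) ` carrier M" by (rule image_eqI) simp
      show "a \<oplus>\<^bsub>M\<^esub> b \<in> (\<phi> ^^ n) ` carrier M" if "a \<in> (\<phi> ^^ n) ` carrier M" "b \<in> (\<phi> ^^ n) ` carrier M" for a b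
      proof -
        have "\<exists>a'\<in>carrier M. a = (\<phi> ^^ n) a'" using that(1) by (simp only: image_iff)
        then obtain a' where ab1: "a' \<in> carrier M" "a = (\<phi> ^^ n) a'" by (rule bexE)
        have "\<exists>b'\<in>carrier M. b = (\<phi> ^^ n) b'" using that(2) by (simp only: image_iff)
        then obtain b' where ab2: "b' \<in> carrier M" "b = (\<phi> ^^ n) b'" by (rule bexE)
        note ab = ab1(1) ab2(1) ab1(2) ab2(2)
        have "a \<oplus>\<^bsub>M\<^esub> b = (\<phi> ^^ n) (a' \<oplus>\<^bsub>M\<^esub> b')" using ena[OF ab(1,2)] ab(3,4) by simp
        moreover have "a' \<oplus>\<^bsub>M\<^esub> b' \<in> carrier M" using ab by simp
        ultimately show ?thesis by (rule image_eqI)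
      qed
      show "\<forall>q\<in>{p \<in> I. n < snd p}. N q \<subseteq> (\<phi> ^^ n) ` carrier M"
      proof (intro ballI subsetI)
        fix q z assume q: "q \<in> {p \<in> I. n < snd p}" and z: "z \<in> N q"
        then obtain \<gamma> i where p: "q = (\<gamma>, i)" "\<gamma> \<in> \<Gamma>" "1 \<le> i" "i \<le> k \<gamma>" "n < i" unfolding I by auto
        obtain a where a: "a \<in> carrier R" "z = a \<odot>\<^bsub>M\<^esub> x \<gamma> i" using z p(1) unfolding N cyc_def by auto
        have j: "1 \<le> i - n" "i - n \<le> k \<gamma>" using p by auto
        have "(\<phi> ^^ n) (x \<gamma> (i - n)) = x \<gamma> i" using jb_pow[OF jb e p(2) j, of n] p by simp
        then have "z = (\<phi> ^^ n) (a \<odot>\<^bsub>M\<^esub> x \<gamma> (i - n))" using a ens xc[OF p(2) j] by simp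
        moreover have "a \<odot>\<^bsub>M\<^esub> x \<gamma> (i - n) \<in> carrier M" using a xc[OF p(2) j] by simp
        ultimately show "z \<in> (\<phi> ^^ n) ` carrier M" by blast
      qed
    qed
  qed
qed

lemma jb_finite:
  assumes fg: "finitely_generated R M" and jb: "nilpotent_jordan_base R M \<phi> \<Gamma> k x"
    and I: "I = {(\<gamma>, i). \<gamma> \<in> \<Gamma> \<and> i \<in> {1..k \<gamma>}}" and N: "N = (\<lambda>(\<gamma>, i). cyc R M (x \<gamma> i))"
  shows "finite I"
proof -
  note B = jb_basic[OF jb I N]
  obtain S where S: "finite S" "S \<subseteq> carrier M"
    "carrier M = {finsum M (\<lambda>s. f s \<odot>\<^bsub>M\<^esub> s) S | f. f \<in> S \<rightarrow> carrier R}"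
    using fg unfolding finitely_generated_def by blast
  have cM: "carrier M = submodule_sum M N I" using B(1) unfolding is_direct_sum_def by blast
  have "\<forall>s\<in>S. \<exists>F. \<exists>f. s = finsum M f F \<and> finite F \<and> F \<subseteq> I \<and> (\<forall>p\<in>F. f p \<in> N p)"
  proof
    fix s assume "s \<in> S"
    then have "s \<in> submodule_sum M N I" using S(2) cM by blast
    then show "\<exists>F. \<exists>f. s = finsum M f F \<and> finite F \<and> F \<subseteq> I \<and> (\<forall>p\<in>F. f p \<in> N p)"
      unfolding submodule_sum_def by blast
  qed
  then obtain Fs where Fs: "\<forall>s\<in>S. \<exists>f. s = finsum M f (Fs s) \<and> finite (Fs s) \<and> Fs s \<subseteq> I \<and> (\<forall>p\<in>Fs s. f p \<in> N p)"
    by (rule bchoice_iff[THEN iffD1, elim_format]) blast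
  define F0 where "F0 = (\<Union>s\<in>S. Fs s)"
  have fF0: "finite F0" unfolding F0_def using S(1) Fs by blast
  have F0I: "F0 \<subseteq> I" unfolding F0_def using Fs by blast
  define P where "P = submodule_sum M N F0"
  have PS: "submodule P R M" unfolding P_def by (rule sum_submodule) (use B F0I in blast)
  have SP: "s \<in> P" if s: "s \<in> S" for s
  proof -
    obtain f where f: "s = finsum M f (Fs s)" "finite (Fs s)" "Fs s \<subseteq> I" "\<forall>p\<in>Fs s. f p \<in> N p"
      using Fs s by blast
    have "finsum M f (Fs s) \<in> P" unfolding P_def
      by (rule sum_intro) (use f s in \<open>auto simp: F0_def\<close>)
    then show ?thesis using f(1) by simp
  qed
  have "I \<subseteq> F0"
  proof (rule ccontr)
    assume "\<not> I \<subseteq> F0"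
    then obtain p where p: "p \<in> I" "p \<notin> F0" by blast
    then obtain \<gamma> i where pi: "p = (\<gamma>, i)" "\<gamma> \<in> \<Gamma>" "i \<in> {1..k \<gamma>}" unfolding I by blast
    have xc: "x \<gamma> i \<in> carrier M" using jb pi unfolding nilpotent_jordan_base_def by blast
    then obtain g where g: "g \<in> S \<rightarrow> carrier R" "x \<gamma> i = finsum M (\<lambda>s. g s \<odot>\<^bsub>M\<^esub> s) S"
      using S(3) by blast
    have "finsum M (\<lambda>s. g s \<odot>\<^bsub>M\<^esub> s) S \<in> P"
    proof (rule finsum_in[OF _ _ _ S(1)])
      show "P \<subseteq> carrier M" using PS sm_carrier by blast
      show "\<zero>\<^bsub>M\<^esub> \<in> P" using PS sm_zero by blast
      show "a \<oplus>\<^bsub>M\<^esub> b \<in> P" if "a \<in> P" "b \<in> P" for a b using PS sm_add that by blast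
      show "\<forall>s\<in>S. g s \<odot>\<^bsub>M\<^esub> s \<in> P" using g(1) SP PS sm_smult by blast
    qed
    then have "x \<gamma> i \<in> P" using g(2) by simp
    then have x1: "x \<gamma> i \<in> submodule_sum M N (I - {p})"
      using sum_mono[of F0 "I - {p}" N] F0I p unfolding P_def by blast
    have "\<one>\<^bsub>R\<^esub> \<odot>\<^bsub>M\<^esub> x \<gamma> i \<in> cyc R M (x \<gamma> i)" unfolding cyc_def by blast
    then have x2: "x \<gamma> i \<in> N p" using xc pi(1) unfolding N by simp
    have x0: "x \<gamma> i = \<zero>\<^bsub>M\<^esub>" using ds_zero[OF B(1) B(3) p(1) x2 x1] .
    have "N p \<subseteq> {\<zero>\<^bsub>M\<^esub>}"
    proof
      fix z assume "z \<in> N p"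
      then obtain a where "a \<in> carrier R" "z = a \<odot>\<^bsub>M\<^esub> x \<gamma> i" using pi(1) unfolding N cyc_def by auto
      then show "z \<in> {\<zero>\<^bsub>M\<^esub>}" using x0 by simp
    qed
    moreover have "\<zero>\<^bsub>M\<^esub> \<in> N p" using B(3) p(1) sm_zero by blast
    ultimately have "N p = {\<zero>\<^bsub>M\<^esub>}" by blast
    then show False using B(2) p(1) unfolding simple_submodule_def by blast
  qed
  then show ?thesis using fF0 finite_subset by blast
qed

end

theorem proposition2p2:
  fixes R :: "('a, 'c) ring_scheme" and M :: "('a, 'b, 'd) module_scheme"
    and \<phi> :: "'b \<Rightarrow> 'b"
    and \<Gamma> :: "'g set" and k :: "'g \<Rightarrow> nat" and x :: "'g \<Rightarrow> nat \<Rightarrow> 'b"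
    and \<Delta> :: "'h set" and l :: "'h \<Rightarrow> nat" and y :: "'h \<Rightarrow> nat \<Rightarrow> 'b"
  assumes "left_module R M"
    and "finitely_generated R M"
    and "semisimple R M"
    and "module_endo R M \<phi>"
    and "nilpotent_endo M \<phi>"
    and "nilpotent_jordan_base R M \<phi> \<Gamma> k x"
    and "nilpotent_jordan_base R M \<phi> \<Delta> l y"
  shows "\<exists>\<pi>. bij_betw \<pi> \<Gamma> \<Delta> \<and> (\<forall>\<gamma>\<in>\<Gamma>. k \<gamma> = l (\<pi> \<gamma>))"
proof -
  interpret left_module R M by (rule assms(1))
  note jx = assms(6) and jy = assms(7) and fg = assms(2) and e = assms(4)
  define Ix where "Ix = {(\<gamma>, i). \<gamma> \<in> \<Gamma> \<and> i \<in> {1..k \<gamma>}}"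
  define Nx where "Nx = (\<lambda>(\<gamma>, i). cyc R M (x \<gamma> i))"
  define Iy where "Iy = {(\<delta>, j). \<delta> \<in> \<Delta> \<and> j \<in> {1..l \<delta>}}"
  define Ny where "Ny = (\<lambda>(\<delta>, j). cyc R M (y \<delta> j))"
  note Bx = jb_basic[OF jx Ix_def Nx_def]
  note By = jb_basic[OF jy Iy_def Ny_def]
  have fIx: "finite Ix" by (rule jb_finite[OF fg jx Ix_def Nx_def])
  have fIy: "finite Iy" by (rule jb_finite[OF fg jy Iy_def Ny_def])
  have k1: "\<forall>\<gamma>\<in>\<Gamma>. 1 \<le> k \<gamma>" using jx unfolding nilpotent_jordan_base_def by blast
  have l1: "\<forall>\<delta>\<in>\<Delta>. 1 \<le> l \<delta>" using jy unfolding nilpotent_jordan_base_def by blast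
  have fG: "finite \<Gamma>"
  proof -
    have "\<Gamma> \<subseteq> fst ` Ix"
    proof
      fix g assume g: "g \<in> \<Gamma>"
      then have "(g, 1) \<in> Ix" using k1 unfolding Ix_def by auto
      then show "g \<in> fst ` Ix" by (rule rev_image_eqI) simp
    qed
    then show ?thesis using fIx finite_subset by blast
  qed
  have fD: "finite \<Delta>"
  proof -
    have "\<Delta> \<subseteq> fst ` Iy"
    proof
      fix g assume g: "g \<in> \<Delta>"
      then have "(g, 1) \<in> Iy" using l1 unfolding Iy_def by auto
      then show "g \<in> fst ` Iy" by (rule rev_image_eqI) simp
    qed
    then show ?thesis using fIy finite_subset by blast
  qed
  have injx: "inj_on Nx Ix" by (rule ds_inj[OF Bx(1) Bx(2)])
  have injy: "inj_on Ny Iy" by (rule ds_inj[OF By(1) By(2)])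
  have c: "card {p \<in> Ix. n < snd p} = card {p \<in> Iy. n < snd p}" for n
  proof -
    define Tx where "Tx = {p \<in> Ix. n < snd p}"
    define Ty where "Ty = {p \<in> Iy. n < snd p}"
    have TxI: "Tx \<subseteq> Ix" and TyI: "Ty \<subseteq> Iy" unfolding Tx_def Ty_def by auto
    have ix: "inj_on Nx Tx" using injx TxI inj_on_subset by blast
    have iy: "inj_on Ny Ty" using injy TyI inj_on_subset by blast
    have "submodule_sum M Nx Tx = (\<phi> ^^ n) ` carrier M"
      unfolding Tx_def by (rule jb_image[OF jx e Ix_def Nx_def, symmetric])
    also have "\<dots> = submodule_sum M Ny Ty"
      unfolding Ty_def by (rule jb_image[OF jy e Iy_def Ny_def])
    finally have eq: "submodule_sum M Nx Tx = submodule_sum M Ny Ty" .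
    have sx: "submodule_sum M Nx Tx = ssum M (Nx ` Tx)"
      by (rule sum_reindex[OF ix]) (use Bx(4) TxI in blast)
    have sy: "submodule_sum M Ny Ty = ssum M (Ny ` Ty)"
      by (rule sum_reindex[OF iy]) (use By(4) TyI in blast)
    have "card (Nx ` Tx) = card (Ny ` Ty)"
    proof (rule card_eq)
      show "finite (Nx ` Tx)" using fIx TxI finite_subset by blast
      show "finite (Ny ` Ty)" using fIy TyI finite_subset by blast
      show "\<forall>X\<in>Nx ` Tx. simple_submodule R M X" using Bx(2) TxI by blast
      show "\<forall>X\<in>Ny ` Ty. simple_submodule R M X" using By(2) TyI by blast
      show "indep M (Nx ` Tx)" by (rule ds_indep[OF Bx(1) Bx(2) TxI])
      show "indep M (Ny ` Ty)" by (rule ds_indep[OF By(1) By(2) TyI])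
      show "ssum M (Nx ` Tx) = ssum M (Ny ` Ty)" using eq sx sy by simp
    qed
    moreover have "card (Nx ` Tx) = card Tx" by (rule card_image[OF ix])
    moreover have "card (Ny ` Ty) = card Ty" by (rule card_image[OF iy])
    ultimately show ?thesis unfolding Tx_def Ty_def by simp
  qed
  show ?thesis
    by (rule block_bij[OF fG fD k1 l1]) (use c in \<open>simp add: Ix_def Iy_def\<close>)
qed

end
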